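(* Assume (a) and (b). Then the problem $$\min_{\beta\in\mathbb{R}}\;\lambda\int f^*\!\Big(-\frac{\beta+L_z(\theta)}{\lambda}\Big)dQ(\theta)+\beta$$ is the dual problem of the ERM-$f$DR problem $$\min_{P\in\triangle_Q(\mathcal{M})}R_z(P)+\lambda D_f(P\|Q).$$ Moreover, the duality gap is zero: $$\min_{P\in\triangle_Q(\mathcal{M})}R_z(P)+\lambda D_f(P\|Q)=\max_{\beta\in\mathbb{R}}\Big(-\lambda\int f^*\!\Big(-\frac{\beta+L_z(\theta)}{\lambda}\Big)dQ(\theta)-\beta\Big).$$
   Context: Setting. - $\mathcal{M}\subseteq\mathbb{R}^d$; $h:\mathcal{M}\times\mathcal{X}\to\mathcal{Y}$; the loss $\ell:\mathcal{Y}\times\mathcal{Y}\to[0,\infty)$ satisfies $\ell(y,y)=0$. - For a dataset $z=((x_1,y_1),\dots,(x_n,y_n))$, $L_z(\theta)=\frac1n\sum_i\ell(h(\theta,x_i),y_i)$ and $R_z(P)=\int L_z\,dP$. - $\triangle_Q(\mathcal{M})$ is the set of Borel probability measures on $\mathcal{M}$ absolutely continuous with respect to the Borel probability measure $Q$. Fix $\lambda>0$. - $f:[0,\infty)\to\mathbb{R}$ is convex with $f(1)=0$ and $f(0)=\lim_{x\to0^+}f(x)$; $D_f(P\|Q)=\int f(\frac{dP}{dQ})\,dQ$. - $\dot f$ is the derivative of $f$ on $(0,\infty)$ and $\dot f^{-1}$ its inverse. - $f^*(t)=\sup_x(tx-f(x))$ is the Legendre–Fenchel transform (supremum over the domain of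 $f$). Assumptions. - (a) $f$ is strictly convex and differentiable. - (b) There exists $\beta\in\mathbb{R}$ with $\dot f^{-1}\big(-\frac{\beta+L_z(\theta)}{\lambda}\big)>0$ for all $\theta\in\operatorname{supp}Q$ and $\int\dot f^{-1}\big(-\frac{\beta+L_z(\theta)}{\lambda}\big)dQ(\theta)=1$. *)

theory Defs
  imports "HOL-Probability.Probability"
begin

definition strictly_convex_on :: "real set \<Rightarrow> (real \<Rightarrow> real) \<Rightarrow> bool" where
  "strictly_convex_on A f \<longleftrightarrow> convex A \<and>
     (\<forall>x\<in>A. \<forall>y\<in>A. \<forall>u::real. x \<noteq> y \<longrightarrow> 0 < u \<longrightarrow> u < 1 \<longrightarrow>
        f (u * x + (1 - u) * y) < u * f x + (1 - u) * f y)"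

definition emp_risk :: "('m \<Rightarrow> 'x \<Rightarrow> 'y) \<Rightarrow> ('y \<Rightarrow> 'y \<Rightarrow> real) \<Rightarrow> ('x \<times> 'y) list \<Rightarrow> 'm \<Rightarrow> real" where
  "emp_risk h loss z \<theta> = (\<Sum>(x, y) \<leftarrow> z. loss (h \<theta> x) y) / real (length z)"

text \<open>Lebesgue integral of an extended-real valued function, taking values in [-inf, inf]
  (positive part minus negative part; used only where the negative part is finite).\<close>
definition ext_integral :: "'a measure \<Rightarrow> ('a \<Rightarrow> ereal) \<Rightarrow> ereal" where
  "ext_integral M u =
     enn2ereal (\<integral>\<^sup>+ x. e2ennreal (max 0 (u x)) \<partial>M)
     - enn2ereal (\<integral>\<^sup>+ x. e2ennreal (max 0 (- u x)) \<partial>M)"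

definition fconj :: "(real \<Rightarrow> real) \<Rightarrow> real \<Rightarrow> ereal" where
  "fconj f t = (SUP x\<in>{0..}. ereal (t * x - f x))"

definition f_div :: "(real \<Rightarrow> real) \<Rightarrow> 'a measure \<Rightarrow> 'a measure \<Rightarrow> ereal" where
  "f_div f P Q = ext_integral Q (\<lambda>\<theta>. ereal (f (enn2real (RN_deriv Q P \<theta>))))"

definition exp_risk :: "('a \<Rightarrow> real) \<Rightarrow> 'a measure \<Rightarrow> ereal" where
  "exp_risk L P = ext_integral P (\<lambda>\<theta>. ereal (L \<theta>))"

definition abs_cont_probs :: "'a measure \<Rightarrow> 'a measure set" where
  "abs_cont_probs Q = {P. sets P = sets Q \<and> prob_space P \<and> absolutely_continuous Q P}"

definition erm_fdr_obj :: "('a \<Rightarrow> real) \<Rightarrow> (real \<Rightarrow> real) \<Rightarrow> real \<Rightarrow> 'a measure \<Rightarrow> 'a measure \<Rightarrow> ereal" where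
  "erm_fdr_obj L f lam Q P = exp_risk L P + ereal lam * f_div f P Q"

definition dual_obj :: "('a \<Rightarrow> real) \<Rightarrow> (real \<Rightarrow> real) \<Rightarrow> real \<Rightarrow> 'a measure \<Rightarrow> real \<Rightarrow> ereal" where
  "dual_obj L f lam Q \<beta> =
     - (ereal lam * ext_integral Q (\<lambda>\<theta>. fconj f (- (\<beta> + L \<theta>) / lam))) - ereal \<beta>"

text \<open>Lagrangian of ERM-fDR relaxed to nonnegative densities g = dP/dQ, with multiplier beta
  for the normalisation constraint int g dQ = 1.\<close>
definition lagrangian :: "('a \<Rightarrow> real) \<Rightarrow> (real \<Rightarrow> real) \<Rightarrow> real \<Rightarrow> 'a measure \<Rightarrow> ('a \<Rightarrow> real) \<Rightarrow> real \<Rightarrow> ereal" where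
  "lagrangian L f lam Q g \<beta> =
     ext_integral Q (\<lambda>\<theta>. ereal (L \<theta> * g \<theta>))
     + ereal lam * ext_integral Q (\<lambda>\<theta>. ereal (f (g \<theta>)))
     + ereal (\<beta> * ((\<integral>\<theta>. g \<theta> \<partial>Q) - 1))"

definition msupport :: "('a::topological_space) measure \<Rightarrow> 'a set" where
  "msupport Q = {\<theta>\<in>space Q. \<forall>U. open U \<longrightarrow> \<theta> \<in> U \<longrightarrow> 0 < emeasure Q (U \<inter> space Q)}"

end

theory Submission
  imports Defs
begin


lemma e2_pos: "e2ennreal (max 0 (ereal y)) = ennreal y"
  by (metis e2ennreal_ereal ennreal.abs_eq sup_max max.commute)

lemma e2_neg: "e2ennreal (max 0 (- ereal y)) = ennreal (- y)"
  using e2_pos[of "-y"] by simp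

lemma EI_real_eq:
  "ext_integral M (\<lambda>x. ereal (u x)) =
     enn2ereal (\<integral>\<^sup>+ x. ennreal (u x) \<partial>M) - enn2ereal (\<integral>\<^sup>+ x. ennreal (- u x) \<partial>M)"
  unfolding ext_integral_def e2_pos e2_neg ..

lemma EI_real:
  assumes u: "u \<in> borel_measurable M" and k: "integrable M k" and le: "AE x in M. k x \<le> u x"
  shows "ext_integral M (\<lambda>x. ereal (u x)) = (if integrable M u then ereal (integral\<^sup>L M u) else \<infinity>)"
proof -
  have "(\<integral>\<^sup>+ x. ennreal (- u x) \<partial>M) \<le> (\<integral>\<^sup>+ x. ennreal (- k x) \<partial>M)"
    by (rule nn_integral_mono_AE) (use le in eventually_elim, auto intro: ennreal_leI)
  moreover have "(\<integral>\<^sup>+ x. ennreal (- k x) \<partial>M) \<noteq> \<infinity>" using k by (simp add: real_integrable_def)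
  ultimately have neg: "(\<integral>\<^sup>+ x. ennreal (- u x) \<partial>M) \<noteq> \<infinity>" by (auto simp: top_unique)
  show ?thesis
  proof (cases "integrable M u")
    case True
    then have pos: "(\<integral>\<^sup>+ x. ennreal (u x) \<partial>M) \<noteq> \<infinity>" by (simp add: real_integrable_def)
    show ?thesis using True pos neg unfolding EI_real_eq real_lebesgue_integral_def[OF True]
      by (cases "\<integral>\<^sup>+ x. ennreal (u x) \<partial>M"; cases "\<integral>\<^sup>+ x. ennreal (- u x) \<partial>M") auto
  next
    case False
    then have pos: "(\<integral>\<^sup>+ x. ennreal (u x) \<partial>M) = \<infinity>" using u neg by (simp add: real_integrable_def)
    show ?thesis using False pos neg unfolding EI_real_eq
      by (cases "\<integral>\<^sup>+ x. ennreal (- u x) \<partial>M") auto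
  qed
qed

lemma EI_cong_AE:
  assumes "AE x in M. u x = v x"
  shows "ext_integral M u = ext_integral M v"
proof -
  have "(\<integral>\<^sup>+ x. e2ennreal (max 0 (u x)) \<partial>M) = (\<integral>\<^sup>+ x. e2ennreal (max 0 (v x)) \<partial>M)"
    by (rule nn_integral_cong_AE) (use assms in eventually_elim, auto)
  moreover have "(\<integral>\<^sup>+ x. e2ennreal (max 0 (- u x)) \<partial>M) = (\<integral>\<^sup>+ x. e2ennreal (max 0 (- v x)) \<partial>M)"
    by (rule nn_integral_cong_AE) (use assms in eventually_elim, auto)
  ultimately show ?thesis unfolding ext_integral_def by simp
qed

lemma ereal_neg_helper: "ereal a \<le> b \<Longrightarrow> - b \<le> ereal (-a)"
  by (cases b) auto

lemma EI_mono_lower: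
  assumes k: "integrable M k" and le: "AE x in M. ereal (k x) \<le> u x"
  shows "ereal (integral\<^sup>L M k) \<le> ext_integral M u"
proof -
  have "ereal (integral\<^sup>L M k) = ext_integral M (\<lambda>x. ereal (k x))"
    using EI_real[OF borel_measurable_integrable[OF k] k] k by simp
  also have "\<dots> \<le> ext_integral M u"
    unfolding ext_integral_def
  proof (rule ereal_minus_mono)
    show "enn2ereal (\<integral>\<^sup>+ x. e2ennreal (max 0 (ereal (k x))) \<partial>M) \<le> enn2ereal (\<integral>\<^sup>+ x. e2ennreal (max 0 (u x)) \<partial>M)"
      unfolding less_eq_ennreal.rep_eq[symmetric]
      by (rule nn_integral_mono_AE) (use le in eventually_elim, auto intro!: e2ennreal_mono max.mono)
    show "enn2ereal (\<integral>\<^sup>+ x. e2ennreal (max 0 (- u x)) \<partial>M) \<le> enn2ereal (\<integral>\<^sup>+ x. e2ennreal (max 0 (- ereal (k x))) \<partial>M)"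
      unfolding less_eq_ennreal.rep_eq[symmetric]
      by (rule nn_integral_mono_AE) (use le in eventually_elim, auto intro!: e2ennreal_mono max.mono intro: ereal_neg_helper)
  qed
  finally show ?thesis .
qed

lemma EI_upper:
  assumes P: "prob_space M" and c0: "0 \<le> c"
    and h_int: "\<And>n. integrable M (h n)"
    and h_mono: "\<And>n x. x \<in> space M \<Longrightarrow> h n x \<le> h (Suc n) x"
    and h_low: "\<And>n x. x \<in> space M \<Longrightarrow> - c \<le> h n x"
    and h_K: "\<And>n. integral\<^sup>L M (h n) \<le> K"
    and u: "\<And>x. x \<in> space M \<Longrightarrow> u x = (SUP n. ereal (h n x))"
  shows "ext_integral M u \<le> ereal K"
proof -
  have h_meas: "\<And>n. h n \<in> borel_measurable M" using h_int by auto
  have u_low: "ereal (- c) \<le> u x" if "x \<in> space M" for x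
    using u[OF that] h_low[OF that, of 0] by (auto intro: SUP_upper2)
  have u_meas: "u \<in> borel_measurable M"
  proof -
    have "(\<lambda>x. SUP n. ereal (h n x)) \<in> borel_measurable M"
      by (rule borel_measurable_SUP) (auto intro: h_meas borel_measurable_ereal)
    then show ?thesis by (rule measurable_cong[THEN iffD1, rotated]) (use u in auto)
  qed
  define pos where "pos = (\<integral>\<^sup>+ x. e2ennreal (max 0 (u x)) \<partial>M)"
  define neg where "neg = (\<integral>\<^sup>+ x. e2ennreal (max 0 (- u x)) \<partial>M)"
  define S where "S = (\<integral>\<^sup>+ x. e2ennreal (u x + ereal c) \<partial>M)"
  have ident: "e2ennreal (max 0 (u x)) + ennreal c = e2ennreal (u x + ereal c) + e2ennreal (max 0 (- u x))"
    if x: "x \<in> space M" for x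
  proof (cases "u x")
    case (real r)
    with u_low[OF x] have rc: "- c \<le> r" by simp
    have "ennreal r + ennreal c = ennreal (r + c) + ennreal (- r)"
    proof (cases "0 \<le> r")
      case True then show ?thesis using c0 by (simp add: ennreal_plus ennreal_neg)
    next
      case False then show ?thesis using rc by (simp add: ennreal_plus[symmetric] ennreal_neg)
    qed
    then show ?thesis using real e2_pos[of r] e2_neg[of r] by (simp add: e2ennreal_ereal)
  next
    case PInf then show ?thesis by simp
  next
    case MInf then show ?thesis using u_low[OF x] by simp
  qed
  have e2m: "(\<lambda>x. e2ennreal (v x)) \<in> borel_measurable M" if "v \<in> borel_measurable M" for v :: "_ \<Rightarrow> ereal"
    using measurable_compose[OF that measurable_e2ennreal] by simp
  have "(\<integral>\<^sup>+ x. e2ennreal (max 0 (u x)) + ennreal c \<partial>M) = pos + ennreal c"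
    unfolding pos_def using u_meas P
    by (subst nn_integral_add) (auto intro!: e2m simp: prob_space.emeasure_space_1)
  moreover have "(\<integral>\<^sup>+ x. e2ennreal (max 0 (u x)) + ennreal c \<partial>M) =
      (\<integral>\<^sup>+ x. e2ennreal (u x + ereal c) + e2ennreal (max 0 (- u x)) \<partial>M)"
    by (rule nn_integral_cong) (use ident in auto)
  moreover have "\<dots> = S + neg"
    unfolding S_def neg_def using u_meas
    by (subst nn_integral_add) (auto intro!: e2m)
  ultimately have eq: "pos + ennreal c = S + neg" by simp
  have "neg \<le> (\<integral>\<^sup>+ x. ennreal c \<partial>M)"
    unfolding neg_def
  proof (rule nn_integral_mono)
    fix x assume x: "x \<in> space M"
    have "max 0 (- u x) \<le> ereal c" using u_low[OF x] c0
      by (cases "u x") auto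
    then show "e2ennreal (max 0 (- u x)) \<le> ennreal c"
      using e2ennreal_mono by (fastforce simp: e2ennreal_ereal)
  qed
  then have negc: "neg \<le> ennreal c" using P by (simp add: prob_space.emeasure_space_1)
  have ptw: "e2ennreal (u x + ereal c) \<le> (SUP n. ennreal (h n x + c))" if x: "x \<in> space M" for x
  proof -
    have "u x + ereal c = (SUP n. ereal (h n x) + ereal c)"
      using u[OF x] SUP_ereal_add_left[of UNIV "ereal c" "\<lambda>n. ereal (h n x)"] by simp
    also have "\<dots> \<le> enn2ereal (SUP n. ennreal (h n x + c))"
    proof (rule SUP_least)
      fix n
      have "ereal (h n x) + ereal c = enn2ereal (ennreal (h n x + c))"
        using h_low[OF x, of n] by (simp add: enn2ereal_ennreal)
      also have "\<dots> \<le> enn2ereal (SUP n. ennreal (h n x + c))"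
        unfolding less_eq_ennreal.rep_eq[symmetric] by (rule SUP_upper) auto
      finally show "ereal (h n x) + ereal c \<le> enn2ereal (SUP n. ennreal (h n x + c))" .
    qed
    finally show ?thesis using e2ennreal_mono by (metis e2ennreal_enn2ereal)
  qed
  have "S \<le> (\<integral>\<^sup>+ x. (SUP n. ennreal (h n x + c)) \<partial>M)"
    unfolding S_def by (rule nn_integral_mono) (use ptw in auto)
  also have "\<dots> = (SUP n. \<integral>\<^sup>+ x. ennreal (h n x + c) \<partial>M)"
    by (rule nn_integral_monotone_convergence_SUP_AE)
       (use h_mono h_meas in \<open>auto intro!: AE_I2 ennreal_leI\<close>)
  also have "\<dots> \<le> ennreal (K + c)"
  proof (rule SUP_least)
    fix n
    have "integrable M (\<lambda>x. h n x + c)" using h_int P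
      by (auto intro!: Bochner_Integration.integrable_add finite_measure.integrable_const prob_space.finite_measure)
    then have "(\<integral>\<^sup>+ x. ennreal (h n x + c) \<partial>M) = ennreal (integral\<^sup>L M (\<lambda>x. h n x + c))"
      proof (rule nn_integral_eq_integral)
      show "AE x in M. 0 \<le> h n x + c"
      proof (rule AE_I2)
        fix x assume "x \<in> space M"
        from h_low[OF this, of n] show "0 \<le> h n x + c" by simp
      qed
    qed
    also have "integral\<^sup>L M (\<lambda>x. h n x + c) = integral\<^sup>L M (h n) + c"
      using h_int P by (simp add: Bochner_Integration.integral_add prob_space.prob_space finite_measure.integrable_const prob_space.finite_measure)
    finally show "(\<integral>\<^sup>+ x. ennreal (h n x + c) \<partial>M) \<le> ennreal (K + c)"
      using h_K[of n] by (auto intro!: ennreal_leI)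
  qed
  finally have SK: "S \<le> ennreal (K + c)" .
  have Kc: "- c \<le> K"
  proof -
    have "- c \<le> integral\<^sup>L M (h 0)"
      by (rule prob_space.integral_ge_const[OF P h_int]) (use h_low in \<open>auto intro!: AE_I2\<close>)
    then show ?thesis using h_K[of 0] by linarith
  qed
  have "enn2ereal (pos + ennreal c) = enn2ereal (S + neg)" using eq by simp
  then have e1: "enn2ereal pos + ereal c = enn2ereal S + enn2ereal neg"
    using c0 by (simp add: plus_ennreal.rep_eq enn2ereal_ennreal)
  have e2: "enn2ereal S \<le> ereal (K + c)"
  proof -
    have "enn2ereal S \<le> enn2ereal (ennreal (K + c))" using SK by (simp add: less_eq_ennreal.rep_eq)
    then show ?thesis using Kc by (simp add: enn2ereal_ennreal)
  qed
  have e3: "enn2ereal neg \<le> ereal c"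
  proof -
    have "enn2ereal neg \<le> enn2ereal (ennreal c)" using negc by (simp add: less_eq_ennreal.rep_eq)
    then show ?thesis using c0 by (simp add: enn2ereal_ennreal)
  qed
  have e4: "0 \<le> enn2ereal neg" "0 \<le> enn2ereal S" "0 \<le> enn2ereal pos" by (simp_all add: enn2ereal_nonneg)
  obtain p where p: "enn2ereal pos = ereal p"
    using e1 e2 e3 e4 by (cases "enn2ereal pos"; cases "enn2ereal S"; cases "enn2ereal neg") auto
  obtain q where q: "enn2ereal neg = ereal q"
    using e3 e4 by (cases "enn2ereal neg") auto
  obtain r where r: "enn2ereal S = ereal r"
    using e2 e4 by (cases "enn2ereal S") auto
  show ?thesis unfolding ext_integral_def pos_def[symmetric] neg_def[symmetric]
    using e1 e2 p q r by simp
qed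



locale fdr =
  fixes f :: "real \<Rightarrow> real"
  assumes conv: "convex_on {0..} f"
    and cont0: "(f \<longlongrightarrow> f 0) (at_right 0)"
    and diff: "\<And>x. x > 0 \<Longrightarrow> f differentiable (at x)"
begin

lemma f_cont: "continuous_on {0..} f"
proof (rule continuous_on_eq_continuous_within[THEN iffD2], intro ballI)
  fix x :: real assume x: "x \<in> {0..}"
  show "continuous (at x within {0..}) f"
  proof (cases "x = 0")
    case True
    then show ?thesis using cont0 by (simp add: continuous_within at_within_Ici_at_right)
  next
    case False
    with x have "x > 0" by simp
    then have "isCont f x" using diff differentiable_imp_continuous_within by blast
    then show ?thesis by (rule continuous_at_imp_continuous_at_within)
  qed
qed

lemma tangent:
  assumes y: "y > 0" and x: "x \<ge> 0"
  shows "deriv f y * (x - y) \<le> f x - f y"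
proof (rule convex_on_imp_above_tangent[OF conv])
  show "connected {0::real..}" by simp
  show "y \<in> interior {0..}" using y by simp
  show "x \<in> {0..}" using x by simp
  have "(f has_real_derivative deriv f y) (at y)"
    using diff[OF y] DERIV_deriv_iff_real_differentiable by blast
  then show "(f has_real_derivative deriv f y) (at y within {0..})"
    by (rule has_field_derivative_at_within)
qed

lemma f_low:
  assumes x: "x \<ge> 0"
  shows "f 1 + deriv f 1 * (x - 1) \<le> f x"
  using tangent[of 1 x] x by simp

lemma f_meas:
  assumes g: "g \<in> borel_measurable M" and nn: "\<And>x. x \<in> space M \<Longrightarrow> 0 \<le> g x"
  shows "(\<lambda>x. f (g x)) \<in> borel_measurable M"
proof -
  have "continuous_on UNIV (\<lambda>x. f (max 0 x))"
    by (rule continuous_on_compose2[OF f_cont]) (auto intro: continuous_intros)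
  then have "(\<lambda>x. f (max 0 (g x))) \<in> borel_measurable M"
    using borel_measurable_continuous_on[OF _ g] by blast
  then show ?thesis by (rule measurable_cong[THEN iffD1, rotated]) (use nn in auto)
qed

definition xN :: "nat \<Rightarrow> real \<Rightarrow> real" where
  "xN N t = (SOME x. x \<in> {0..real N} \<and> (\<forall>y\<in>{0..real N}. t * y - f y \<le> t * x - f x))"

lemma xN_prop: "xN N t \<in> {0..real N} \<and> (\<forall>y\<in>{0..real N}. t * y - f y \<le> t * xN N t - f (xN N t))"
proof -
  have "continuous_on {0..real N} (\<lambda>y. t * y - f y)"
    by (intro continuous_intros continuous_on_subset[OF f_cont]) auto
  then have "\<exists>x\<in>{0..real N}. \<forall>y\<in>{0..real N}. t * y - f y \<le> t * x - f x"
    by (intro continuous_attains_sup) auto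
  then show ?thesis unfolding xN_def by - (rule someI_ex, blast)
qed

lemma xN_mono: "mono (xN N)"
proof (rule monoI)
  fix t1 t2 :: real assume le: "t1 \<le> t2"
  show "xN N t1 \<le> xN N t2"
  proof (cases "t1 = t2")
    case False
    with le have lt: "t1 < t2" by simp
    have a: "t1 * xN N t2 - f (xN N t2) \<le> t1 * xN N t1 - f (xN N t1)"
      using xN_prop[of N t1] xN_prop[of N t2] by blast
    have b: "t2 * xN N t1 - f (xN N t1) \<le> t2 * xN N t2 - f (xN N t2)"
      using xN_prop[of N t1] xN_prop[of N t2] by blast
    have "0 \<le> (t2 - t1) * (xN N t2 - xN N t1)" using a b by (simp add: algebra_simps)
    then show ?thesis using lt by (simp add: zero_le_mult_iff)
  qed simp
qed

definition hN :: "nat \<Rightarrow> real \<Rightarrow> real" where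
  "hN N t = t * xN N t - f (xN N t)"

lemma hN_low: "- f 0 \<le> hN N t"
  using xN_prop[of N t] unfolding hN_def by force

lemma hN_mono: "hN N t \<le> hN (Suc N) t"
  using xN_prop[of N t] xN_prop[of "Suc N" t] unfolding hN_def by auto

lemma hN_ge: "x \<in> {0..real N} \<Longrightarrow> t * x - f x \<le> hN N t"
  using xN_prop[of N t] unfolding hN_def by auto

lemma fconj_SUP: "fconj f t = (SUP N. ereal (hN N t))"
  unfolding fconj_def
proof (rule antisym)
  show "(SUP x\<in>{0..}. ereal (t * x - f x)) \<le> (SUP N. ereal (hN N t))"
  proof (rule SUP_least)
    fix x :: real assume x: "x \<in> {0..}"
    have "x \<in> {0..real (nat \<lceil>x\<rceil>)}" using x by (auto intro: real_nat_ceiling_ge)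
    then have "ereal (t * x - f x) \<le> ereal (hN (nat \<lceil>x\<rceil>) t)" using hN_ge by simp
    also have "\<dots> \<le> (SUP N. ereal (hN N t))" by (rule SUP_upper) simp
    finally show "ereal (t * x - f x) \<le> (SUP N. ereal (hN N t))" .
  qed
  show "(SUP N. ereal (hN N t)) \<le> (SUP x\<in>{0..}. ereal (t * x - f x))"
  proof (rule SUP_least)
    fix N
    show "ereal (hN N t) \<le> (SUP x\<in>{0..}. ereal (t * x - f x))"
      unfolding hN_def by (rule SUP_upper) (use xN_prop[of N t] in auto)
  qed
qed

lemma fconj_ge: "x \<ge> 0 \<Longrightarrow> ereal (t * x - f x) \<le> fconj f t"
  unfolding fconj_def by (rule SUP_upper) auto

lemma f_bdd: "\<exists>B. \<forall>x\<in>{0..real N}. \<bar>f x\<bar> \<le> B"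
proof -
  have "compact (f ` {0..real N})"
    by (rule compact_continuous_image[OF continuous_on_subset[OF f_cont]]) auto
  then have "bounded (f ` {0..real N})" by (rule compact_imp_bounded)
  then obtain B where "\<forall>y\<in>f ` {0..real N}. norm y \<le> B" unfolding bounded_iff by blast
  then show ?thesis by auto
qed

lemma deriv_inj:
  assumes strict: "strictly_convex_on {0..} f"
  shows "inj_on (deriv f) {0<..}"
proof (rule inj_onI, rule ccontr)
  fix a b :: real assume a: "a \<in> {0<..}" and b: "b \<in> {0<..}" and e: "deriv f a = deriv f b" and ne: "a \<noteq> b"
  {
    fix a b :: real assume a: "a > 0" and b: "b > 0" and e: "deriv f a = deriv f b" and lt: "a < b"
    have t1: "deriv f a * (b - a) \<le> f b - f a" using tangent[of a b] a b by simp
    have t2: "deriv f b * (a - b) \<le> f a - f b" using tangent[of b a] a b by simp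
    have m: "deriv f a * ((a + b) / 2 - a) \<le> f ((a + b) / 2) - f a" using tangent[of a "(a+b)/2"] a b by simp
    have sc: "\<forall>x\<in>{0..}. \<forall>y\<in>{0..}. \<forall>u::real. x \<noteq> y \<longrightarrow> 0 < u \<longrightarrow> u < 1 \<longrightarrow>
        f (u * x + (1 - u) * y) < u * f x + (1 - u) * f y"
      using strict unfolding strictly_convex_on_def by blast
    have "f ((1/2) * a + (1 - 1/2) * b) < (1/2) * f a + (1 - 1/2) * f b"
      using sc[rule_format, of a b "1/2"] a b lt by simp
    moreover have "(1/2) * a + (1 - 1/2) * b = (a + b) / 2" by simp
    ultimately have s1: "f ((a + b) / 2) < (f a + f b) / 2" by (simp only:) (simp add: add_divide_distrib)
    have e1: "deriv f b * (a - b) = - (deriv f a * (b - a))" using e by (simp add: algebra_simps)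
    have e2: "deriv f a * ((a + b) / 2 - a) = (deriv f a * (b - a)) / 2" by (simp add: field_simps)
    have False
    proof -
      define D where "D = deriv f a * (b - a)"
      define fm where "fm = f ((a + b) / 2)"
      have "D \<le> f b - f a" "- D \<le> f a - f b" "D / 2 \<le> fm - f a" "fm < (f a + f b) / 2"
        using t1 t2 m s1 e1 e2 unfolding D_def fm_def by simp_all
      then have "D \<le> f b - f a" "- D \<le> f a - f b" "D \<le> 2 * fm - 2 * f a" "2 * fm < f a + f b"
        by simp_all
      then show False by linarith
    qed
  }
  note key = this
  from ne have "a < b \<or> b < a" by linarith
  then show False using key[of a b] key[of b a] a b e by auto
qed

end



locale dsetup = fdr +
  fixes Q :: "'a measure" and L :: "'a \<Rightarrow> real" and lam :: real
  assumes P: "prob_space Q" and L_meas: "L \<in> borel_measurable Q"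
    and L_nn: "\<And>x. 0 \<le> L x" and lam_pos: "0 < lam"
begin

lemma fin: "finite_measure Q" using P by (rule prob_space.finite_measure)

lemma int_const: "integrable Q (\<lambda>_. c::real)"
  using fin by (rule finite_measure.integrable_const)

lemma integral_const': "integral\<^sup>L Q (\<lambda>_. c::real) = c"
  using P by (simp add: prob_space.prob_space)

lemma EI_Lg:
  assumes g: "g \<in> borel_measurable Q" and that: "\<And>x. x \<in> space Q \<Longrightarrow> 0 \<le> g x"
  shows "ext_integral Q (\<lambda>x. ereal (L x * g x)) = (if integrable Q (\<lambda>x. L x * g x) then ereal (integral\<^sup>L Q (\<lambda>x. L x * g x)) else \<infinity>)"
  by (rule EI_real[where k = "\<lambda>_. 0"]) (use L_meas g that L_nn in \<open>auto intro!: AE_I2\<close>)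

lemma EI_fg:
  assumes g: "g \<in> borel_measurable Q" and gi: "integrable Q g" and nn: "\<And>x. x \<in> space Q \<Longrightarrow> 0 \<le> g x"
  shows "ext_integral Q (\<lambda>x. ereal (f (g x))) = (if integrable Q (\<lambda>x. f (g x)) then ereal (integral\<^sup>L Q (\<lambda>x. f (g x))) else \<infinity>)"
proof (rule EI_real[where k = "\<lambda>x. f 1 + deriv f 1 * (g x - 1)"])
  show "(\<lambda>x. f (g x)) \<in> borel_measurable Q" using f_meas[OF g nn] .
  show "integrable Q (\<lambda>x. f 1 + deriv f 1 * (g x - 1))"
    using gi int_const by (intro Bochner_Integration.integrable_add integrable_mult_right Bochner_Integration.integrable_diff) auto
  show "AE x in Q. f 1 + deriv f 1 * (g x - 1) \<le> f (g x)"
    by (rule AE_I2) (use f_low nn in auto)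
qed

lemma weak:
  assumes g: "g \<in> borel_measurable Q" and gi: "integrable Q g" and nn: "\<And>x. x \<in> space Q \<Longrightarrow> 0 \<le> g x"
  shows "dual_obj L f lam Q \<beta> \<le> lagrangian L f lam Q g \<beta>"
proof (cases "integrable Q (\<lambda>x. L x * g x) \<and> integrable Q (\<lambda>x. f (g x))")
  case True
  then have i1: "integrable Q (\<lambda>x. L x * g x)" and i2: "integrable Q (\<lambda>x. f (g x))" by auto
  define kk where "kk x = (- (\<beta> * g x) - L x * g x) / lam - f (g x)" for x
  have kk_int: "integrable Q kk" unfolding kk_def
    using i1 i2 gi by (intro Bochner_Integration.integrable_diff integrable_divide Bochner_Integration.integrable_diff integrable_mult_right) auto
  have kk_eq: "integral\<^sup>L Q kk = (- (\<beta> * integral\<^sup>L Q g) - integral\<^sup>L Q (\<lambda>x. L x * g x)) / lam - integral\<^sup>L Q (\<lambda>x. f (g x))"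
    unfolding kk_def using i1 i2 gi
    by (simp add: Bochner_Integration.integral_diff integrable_divide Bochner_Integration.integrable_diff integrable_mult_right Bochner_Integration.integrable_minus)
  have "ereal (integral\<^sup>L Q kk) \<le> ext_integral Q (\<lambda>x. fconj f (- (\<beta> + L x) / lam))"
  proof (rule EI_mono_lower[OF kk_int], rule AE_I2)
    fix x assume x: "x \<in> space Q"
    have e: "kk x = (- (\<beta> + L x) / lam) * g x - f (g x)" unfolding kk_def by (simp add: field_simps)
    show "ereal (kk x) \<le> fconj f (- (\<beta> + L x) / lam)" unfolding e by (rule fconj_ge[OF nn[OF x]])
  qed
  moreover have lag: "lagrangian L f lam Q g \<beta> = ereal (integral\<^sup>L Q (\<lambda>x. L x * g x) + lam * integral\<^sup>L Q (\<lambda>x. f (g x)) + \<beta> * (integral\<^sup>L Q g - 1))"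
    unfolding lagrangian_def using EI_Lg[OF g nn] EI_fg[OF g gi nn] i1 i2 by simp
  ultimately show ?thesis
  proof (cases "ext_integral Q (\<lambda>x. fconj f (- (\<beta> + L x) / lam))")
    case (real e)
    assume "ereal (integral\<^sup>L Q kk) \<le> ext_integral Q (\<lambda>x. fconj f (- (\<beta> + L x) / lam))"
    then have "integral\<^sup>L Q kk \<le> e" using real by simp
    then have "lam * integral\<^sup>L Q kk \<le> lam * e" using lam_pos by simp
    moreover have "lam * integral\<^sup>L Q kk = - (\<beta> * integral\<^sup>L Q g) - integral\<^sup>L Q (\<lambda>x. L x * g x) - lam * integral\<^sup>L Q (\<lambda>x. f (g x))"
      unfolding kk_eq using lam_pos by (simp add: field_simps)
    ultimately show ?thesis using real unfolding dual_obj_def lag by (simp add: algebra_simps)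
  qed (use lam_pos in \<open>auto simp: dual_obj_def\<close>)
next
  case False
  then have "lagrangian L f lam Q g \<beta> = \<infinity>"
    unfolding lagrangian_def using EI_Lg[OF g nn] EI_fg[OF g gi nn] lam_pos by auto
  then show ?thesis by simp
qed


lemma t_meas: "(\<lambda>x. - (\<beta> + L x) / lam) \<in> borel_measurable Q"
  using L_meas by measurable

lemma INF_le:
  "(INF g \<in> {g. g \<in> borel_measurable Q \<and> (\<forall>\<theta>\<in>space Q. g \<theta> \<ge> 0) \<and> integrable Q g}.
      lagrangian L f lam Q g \<beta>) \<le> dual_obj L f lam Q \<beta>"
  (is "?I \<le> _")
proof -
  define t where "t x = - (\<beta> + L x) / lam" for x
  define gN where "gN N x = xN N (t x)" for N x
  define hh where "hh N x = hN N (t x)" for N x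
  have tm: "t \<in> borel_measurable Q" unfolding t_def by (rule t_meas)
  have gNm: "gN N \<in> borel_measurable Q" for N
    unfolding gN_def using measurable_compose[OF tm borel_measurable_mono[OF xN_mono]] by simp
  have gN01: "0 \<le> gN N x" "gN N x \<le> real N" for N x unfolding gN_def using xN_prop[of N "t x"] by auto
  have gNi: "integrable Q (gN N)" for N
    by (rule finite_measure.integrable_const_bound[OF fin, where B = "real N"]) (use gN01 gNm in auto)
  have hh_eq: "hh N x = (- (\<beta> * gN N x) - L x * gN N x) / lam - f (gN N x)" for N x
    unfolding hh_def hN_def gN_def t_def using lam_pos by (simp add: field_simps)
  have hh_low: "- \<bar>f 0\<bar> \<le> hh N x" for N x unfolding hh_def using hN_low[of N "t x"] by simp
  have fgm: "(\<lambda>x. f (gN N x)) \<in> borel_measurable Q" for N using f_meas[OF gNm] gN01 by blast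
  have fgi: "integrable Q (\<lambda>x. f (gN N x))" for N
  proof -
    obtain B where B: "\<forall>x\<in>{0..real N}. \<bar>f x\<bar> \<le> B" using f_bdd by blast
    show ?thesis
      by (rule finite_measure.integrable_const_bound[OF fin, where B = B]) (use B gN01 fgm in auto)
  qed
  have Lgi: "integrable Q (\<lambda>x. L x * gN N x)" for N
  proof -
    obtain B where B: "\<forall>x\<in>{0..real N}. \<bar>f x\<bar> \<le> B" using f_bdd by blast
    have "norm (L x * gN N x) \<le> lam * \<bar>f 0\<bar> + lam * B + \<bar>\<beta>\<bar> * real N" for x
    proof -
      have e: "L x * gN N x = - lam * hh N x - lam * f (gN N x) - \<beta> * gN N x"
        unfolding hh_eq using lam_pos by (simp add: field_simps)
      have "- hh N x \<le> \<bar>f 0\<bar>" using hh_low[of N x] by linarith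
      then have "lam * (- hh N x) \<le> lam * \<bar>f 0\<bar>" using lam_pos by (intro mult_left_mono) auto
      then have "- lam * hh N x \<le> lam * \<bar>f 0\<bar>" by simp
      moreover have "- f (gN N x) \<le> B" using B gN01[of N x] by force
      then have "lam * (- f (gN N x)) \<le> lam * B" using lam_pos by (intro mult_left_mono) auto
      then have "- lam * f (gN N x) \<le> lam * B" by simp
      moreover have "- \<beta> * gN N x \<le> \<bar>\<beta>\<bar> * gN N x" using gN01[of N x] by (intro mult_right_mono) auto
      moreover have "\<bar>\<beta>\<bar> * gN N x \<le> \<bar>\<beta>\<bar> * real N" using gN01[of N x] by (intro mult_left_mono) auto
      moreover have "0 \<le> L x * gN N x" using L_nn gN01 by simp
      ultimately show ?thesis using e by simp
    qed
    then show ?thesis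
      by (intro finite_measure.integrable_const_bound[OF fin] AE_I2) (use L_meas gNm in auto)
  qed
  have hhi: "integrable Q (hh N)" for N
    unfolding hh_eq[abs_def] using Lgi[of N] fgi[of N] gNi[of N]
    by (intro Bochner_Integration.integrable_diff integrable_divide Bochner_Integration.integrable_diff integrable_mult_right) auto
  have hh_int: "integral\<^sup>L Q (hh N) = (- (\<beta> * integral\<^sup>L Q (gN N)) - integral\<^sup>L Q (\<lambda>x. L x * gN N x)) / lam - integral\<^sup>L Q (\<lambda>x. f (gN N x))" for N
    unfolding hh_eq[abs_def] using Lgi[of N] fgi[of N] gNi[of N]
    by (simp add: Bochner_Integration.integral_diff integrable_divide Bochner_Integration.integrable_diff integrable_mult_right Bochner_Integration.integrable_minus)
  have lagN: "lagrangian L f lam Q (gN N) \<beta> = ereal (- lam * integral\<^sup>L Q (hh N) - \<beta>)" for N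
  proof -
    have "lagrangian L f lam Q (gN N) \<beta> = ereal (integral\<^sup>L Q (\<lambda>x. L x * gN N x) + lam * integral\<^sup>L Q (\<lambda>x. f (gN N x)) + \<beta> * (integral\<^sup>L Q (gN N) - 1))"
      unfolding lagrangian_def using EI_Lg[OF gNm gN01(1)] EI_fg[OF gNm gNi gN01(1)] Lgi fgi by simp
    also have "\<dots> = ereal (- lam * integral\<^sup>L Q (hh N) - \<beta>)"
      unfolding hh_int using lam_pos by (simp add: field_simps)
    finally show ?thesis .
  qed
  have inS: "gN N \<in> {g. g \<in> borel_measurable Q \<and> (\<forall>\<theta>\<in>space Q. g \<theta> \<ge> 0) \<and> integrable Q g}" for N
    using gNm gN01 gNi by auto
  have Ile: "?I \<le> ereal (- lam * integral\<^sup>L Q (hh N) - \<beta>)" for N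
    using INF_lower[OF inS[of N], of "\<lambda>g. lagrangian L f lam Q g \<beta>"] lagN by simp
  define E where "E = ext_integral Q (\<lambda>x. fconj f (- (\<beta> + L x) / lam))"
  have Elow: "ereal (- f 0) \<le> E"
  proof -
    have "ereal (integral\<^sup>L Q (\<lambda>_. - f 0)) \<le> E"
      unfolding E_def by (rule EI_mono_lower[OF int_const], rule AE_I2) (use fconj_ge[of 0] in simp)
    then show ?thesis by (simp add: prob_space.prob_space[OF P])
  qed
  show ?thesis
  proof (rule ccontr)
    assume "\<not> ?I \<le> dual_obj L f lam Q \<beta>"
    then have lt: "dual_obj L f lam Q \<beta> < ?I" by simp
    obtain mr where mr: "?I = ereal mr"
      using lt Ile[of 0] by (cases ?I) auto
    define K where "K = (- mr - \<beta>) / lam"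
    have hK: "integral\<^sup>L Q (hh N) \<le> K" for N
    proof -
      have "mr \<le> - lam * integral\<^sup>L Q (hh N) - \<beta>" using Ile[of N] mr by simp
      then have "lam * integral\<^sup>L Q (hh N) \<le> - mr - \<beta>" by simp
      then show ?thesis unfolding K_def using lam_pos by (simp add: pos_le_divide_eq mult.commute)
    qed
    have "E \<le> ereal K" unfolding E_def
    proof (rule EI_upper[OF P _ hhi _ hh_low hK])
      show "hh n x \<le> hh (Suc n) x" for n x unfolding hh_def by (rule hN_mono)
      show "fconj f (- (\<beta> + L x) / lam) = (SUP n. ereal (hh n x))" for x
        unfolding hh_def t_def by (rule fconj_SUP)
    qed simp
    then obtain e where e: "E = ereal e" "e \<le> K" using Elow by (cases E) auto
    have "lam * e \<le> lam * K" using e lam_pos by simp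
    then have "mr \<le> - lam * e - \<beta>" unfolding K_def using lam_pos by simp
    then have "?I \<le> dual_obj L f lam Q \<beta>" unfolding dual_obj_def E_def[symmetric] e mr by simp
    then show False using lt by simp
  qed
qed

lemma INF_eq:
  "dual_obj L f lam Q \<beta> = (INF g \<in> {g. g \<in> borel_measurable Q \<and> (\<forall>\<theta>\<in>space Q. g \<theta> \<ge> 0) \<and> integrable Q g}.
      lagrangian L f lam Q g \<beta>)"
  by (rule antisym[OF INF_greatest INF_le]) (auto intro: weak)

end



lemma AE_msupport:
  fixes Q :: "'a::second_countable_topology measure"
  assumes sets: "sets Q = sets (restrict_space borel (space Q))"
  shows "AE x in Q. x \<in> msupport Q"
proof -
  obtain B :: "'a set set" where B: "countable B" "topological_basis B" using ex_countable_basis by blast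
  define I where "I = {b \<in> B. emeasure Q (b \<inter> space Q) = 0}"
  have meas: "U \<inter> space Q \<in> sets Q" if "open U" for U
  proof -
    have "U \<in> sets borel" using that by simp
    then have "U \<inter> space Q \<in> sets (restrict_space borel (space Q))"
      unfolding sets_restrict_space by (auto intro!: image_eqI[where x = U])
    then show ?thesis using sets by simp
  qed
  have N: "(\<Union>b\<in>I. b \<inter> space Q) \<in> null_sets Q"
  proof (rule null_sets_UN')
    show "countable I" using B(1) unfolding I_def by (rule countable_subset[rotated]) auto
    fix b assume "b \<in> I"
    then show "b \<inter> space Q \<in> null_sets Q"
      using meas topological_basis_open[OF B(2)] unfolding I_def by auto
  qed
  show ?thesis
  proof (rule AE_I'[OF N], safe)
    fix x assume x: "x \<in> space Q" and nx: "x \<notin> msupport Q"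
    then obtain U where U: "open U" "x \<in> U" "\<not> 0 < emeasure Q (U \<inter> space Q)"
      unfolding msupport_def by auto
    then have U0: "emeasure Q (U \<inter> space Q) = 0" by (simp add: not_gr_zero)
    obtain b where b: "b \<in> B" "x \<in> b" "b \<subseteq> U" using topological_basisE[OF B(2) U(1) U(2)] by blast
    have "emeasure Q (b \<inter> space Q) \<le> emeasure Q (U \<inter> space Q)"
      using b meas[OF U(1)] by (intro emeasure_mono) auto
    then have "b \<in> I" using U0 b(1) unfolding I_def by simp
    then show "x \<in> (\<Union>b\<in>I. b \<inter> space Q)" using b x by auto
  qed
qed

lemma arith1:
  fixes lam t G Lx \<beta> f0 f1 d1 fG :: real
  assumes lam: "lam > 0" and e: "lam * (t * G) = - (\<beta> * G) - Lx * G" and k: "- f0 \<le> t * G - fG"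
    and fl: "f1 + d1 * (G - 1) \<le> fG" and LG: "0 \<le> Lx * G"
  shows "\<bar>Lx * G\<bar> \<le> \<bar>- (\<beta> * G) + lam * (f0 - f1 - d1 * (G - 1))\<bar>"
    and "\<bar>fG\<bar> \<le> \<bar>f1 + d1 * (G - 1)\<bar> + \<bar>- (\<beta> * G) / lam + f0\<bar>"
proof -
  have "f1 + d1 * (G - 1) - f0 \<le> t * G" using k fl by linarith
  then have "lam * (f1 + d1 * (G - 1) - f0) \<le> lam * (t * G)" using lam by (intro mult_left_mono) auto
  then have "Lx * G \<le> - (\<beta> * G) + lam * (f0 - f1 - d1 * (G - 1))" using e by (simp add: algebra_simps)
  then show "\<bar>Lx * G\<bar> \<le> \<bar>- (\<beta> * G) + lam * (f0 - f1 - d1 * (G - 1))\<bar>" using LG by linarith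
  have "t * G = (- (\<beta> * G) - Lx * G) / lam" using e lam by (simp add: field_simps)
  also have "\<dots> = - (\<beta> * G) / lam - (Lx * G) / lam" by (simp add: diff_divide_distrib)
  finally have tg: "t * G = - (\<beta> * G) / lam - (Lx * G) / lam" .
  have "0 \<le> (Lx * G) / lam" using LG lam by simp
  then have "fG \<le> - (\<beta> * G) / lam + f0" using tg k by linarith
  then show "\<bar>fG\<bar> \<le> \<bar>f1 + d1 * (G - 1)\<bar> + \<bar>- (\<beta> * G) / lam + f0\<bar>" using fl by linarith
qed
context dsetup
begin

lemma sfQ: "sigma_finite_measure Q" using P prob_space_def finite_measure_def by blast

lemma EI_nonneg:
  assumes "\<And>x. 0 \<le> u x"
  shows "ext_integral M (\<lambda>x. ereal (u x)) = enn2ereal (\<integral>\<^sup>+ x. ennreal (u x) \<partial>M)"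
  unfolding EI_real_eq using assms by (simp add: ennreal_neg zero_ennreal.rep_eq)

lemma lag_cong:
  assumes g1: "g1 \<in> borel_measurable Q" and g2: "g2 \<in> borel_measurable Q" and ae: "AE x in Q. g1 x = g2 x"
  shows "lagrangian L f lam Q g1 \<beta> = lagrangian L f lam Q g2 \<beta>"
proof -
  have "ext_integral Q (\<lambda>x. ereal (L x * g1 x)) = ext_integral Q (\<lambda>x. ereal (L x * g2 x))"
    by (rule EI_cong_AE) (use ae in auto)
  moreover have "ext_integral Q (\<lambda>x. ereal (f (g1 x))) = ext_integral Q (\<lambda>x. ereal (f (g2 x)))"
    by (rule EI_cong_AE) (use ae in auto)
  moreover have "integral\<^sup>L Q g1 = integral\<^sup>L Q g2" by (rule integral_cong_AE[OF g1 g2 ae])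
  ultimately show ?thesis unfolding lagrangian_def by simp
qed

lemma erm_lag:
  assumes P': "P' \<in> abs_cont_probs Q"
  defines "r \<equiv> \<lambda>x. enn2real (RN_deriv Q P' x)"
  shows "r \<in> borel_measurable Q" "\<And>x. 0 \<le> r x" "integrable Q r" "integral\<^sup>L Q r = 1"
    "erm_fdr_obj L f lam Q P' = lagrangian L f lam Q r \<beta>"
proof -
  interpret Qp: prob_space Q by (rule P)
  from P' have sP': "sets P' = sets Q" and pP': "prob_space P'" and ac: "absolutely_continuous Q P'"
    unfolding abs_cont_probs_def by auto
  interpret P'p: prob_space P' by (rule pP')
  have sfP': "sigma_finite_measure P'" using pP' prob_space_def finite_measure_def by blast
  show rm: "r \<in> borel_measurable Q" unfolding r_def by measurable
  show rnn: "\<And>x. 0 \<le> r x" unfolding r_def by simp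
  have fin: "AE x in Q. RN_deriv Q P' x \<noteq> \<infinity>" by (rule Qp.RN_deriv_finite[OF sfP' ac sP'])
  have ae_r: "AE x in Q. RN_deriv Q P' x = ennreal (r x)"
    using fin unfolding r_def by eventually_elim (auto simp: ennreal_enn2real_if)
  have "integrable P' (\<lambda>_. 1::real)" by simp
  then show ri: "integrable Q r"
    using Qp.RN_deriv_integrable[OF sfP' ac sP', of "\<lambda>_. 1"] unfolding r_def by simp
  have "integral\<^sup>L P' (\<lambda>_. 1::real) = integral\<^sup>L Q r"
    using Qp.RN_deriv_integral[OF sfP' ac sP', of "\<lambda>_. 1"] unfolding r_def by simp
  then show "integral\<^sup>L Q r = 1" using P'p.prob_space by simp
  have "exp_risk L P' = enn2ereal (\<integral>\<^sup>+ x. ennreal (L x) \<partial>P')"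
    unfolding exp_risk_def by (rule EI_nonneg) (rule L_nn)
  also have "(\<integral>\<^sup>+ x. ennreal (L x) \<partial>P') = (\<integral>\<^sup>+ x. RN_deriv Q P' x * ennreal (L x) \<partial>Q)"
    by (rule Qp.RN_deriv_nn_integral[OF ac sP']) (use L_meas in measurable)
  also have "\<dots> = (\<integral>\<^sup>+ x. ennreal (L x * r x) \<partial>Q)"
    by (rule nn_integral_cong_AE) (use ae_r in eventually_elim, auto simp: ennreal_mult'' L_nn rnn mult.commute)
  also have "enn2ereal \<dots> = ext_integral Q (\<lambda>x. ereal (L x * r x))"
    by (rule EI_nonneg[symmetric]) (simp add: L_nn rnn)
  finally have "exp_risk L P' = ext_integral Q (\<lambda>x. ereal (L x * r x))" .
  moreover have "f_div f P' Q = ext_integral Q (\<lambda>x. ereal (f (r x)))"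
    unfolding f_div_def r_def ..
  ultimately show "erm_fdr_obj L f lam Q P' = lagrangian L f lam Q r \<beta>"
    unfolding erm_fdr_obj_def lagrangian_def using \<open>integral\<^sup>L Q r = 1\<close> by simp
qed


lemma dual_opt:
  assumes gi: "integrable Q gst"
    and good: "AE x in Q. 0 < gst x \<and> deriv f (gst x) = - (\<beta> + L x) / lam"
  defines "gs \<equiv> \<lambda>x. max 0 (gst x)"
  shows "gs \<in> borel_measurable Q" "\<And>x. 0 \<le> gs x" "integrable Q gs" "integral\<^sup>L Q gs = integral\<^sup>L Q gst"
    "dual_obj L f lam Q \<beta> = lagrangian L f lam Q gs \<beta>"
proof -
  define t where "t x = - (\<beta> + L x) / lam" for x
  have gstm: "gst \<in> borel_measurable Q" using gi by auto
  show gsm: "gs \<in> borel_measurable Q" unfolding gs_def using gstm by measurable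
  show gsnn: "\<And>x. 0 \<le> gs x" unfolding gs_def by simp
  have ae_eq: "AE x in Q. gs x = gst x" using good unfolding gs_def by eventually_elim auto
  show gsi: "integrable Q gs" using integrable_cong_AE[OF gsm gstm ae_eq] gi by simp
  show "integral\<^sup>L Q gs = integral\<^sup>L Q gst" by (rule integral_cong_AE[OF gsm gstm ae_eq])
  define kk where "kk x = t x * gs x - f (gs x)" for x
  have Fk: "AE x in Q. fconj f (t x) = ereal (kk x)"
    using good ae_eq
  proof eventually_elim
    case (elim x)
    then have g0: "0 < gs x" and d: "deriv f (gs x) = t x" unfolding t_def by auto
    show ?case
    proof (rule antisym)
      show "fconj f (t x) \<le> ereal (kk x)" unfolding fconj_def
      proof (rule SUP_least)
        fix y :: real assume "y \<in> {0..}"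
        then have "t x * (y - gs x) \<le> f y - f (gs x)" using tangent[OF g0, of y] d by simp
        then show "ereal (t x * y - f y) \<le> ereal (kk x)" unfolding kk_def by (simp add: algebra_simps)
      qed
      show "ereal (kk x) \<le> fconj f (t x)" unfolding kk_def by (rule fconj_ge[OF gsnn])
    qed
  qed
  have klow: "AE x in Q. - f 0 \<le> kk x"
    using Fk
  proof eventually_elim
    case (elim x)
    have "ereal (t x * 0 - f 0) \<le> fconj f (t x)" by (rule fconj_ge) simp
    then show ?case using elim by simp
  qed
  have fgm: "(\<lambda>x. f (gs x)) \<in> borel_measurable Q" using f_meas[OF gsm] gsnn by blast
  have Lgm: "(\<lambda>x. L x * gs x) \<in> borel_measurable Q" using L_meas gsm by measurable
  have eq: "lam * (t x * gs x) = - (\<beta> * gs x) - L x * gs x" for x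
    unfolding t_def using lam_pos by (simp add: field_simps)
  have bnds: "AE x in Q. \<bar>L x * gs x\<bar> \<le> \<bar>- (\<beta> * gs x) + lam * (f 0 - f 1 - deriv f 1 * (gs x - 1))\<bar>
      \<and> \<bar>f (gs x)\<bar> \<le> \<bar>f 1 + deriv f 1 * (gs x - 1)\<bar> + \<bar>- (\<beta> * gs x) / lam + f 0\<bar>"
    using klow
  proof eventually_elim
    case (elim x)
    have a: "- f 0 \<le> t x * gs x - f (gs x)" using elim unfolding kk_def .
    have b: "f 1 + deriv f 1 * (gs x - 1) \<le> f (gs x)" using f_low[OF gsnn] .
    have c: "0 \<le> L x * gs x" using L_nn gsnn by simp
    show ?case using arith1[OF lam_pos eq a b c] by simp
  qed
  have fgi: "integrable Q (\<lambda>x. f (gs x))"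
  proof (rule Bochner_Integration.integrable_bound[OF _ fgm])
    show "integrable Q (\<lambda>x. \<bar>f 1 + deriv f 1 * (gs x - 1)\<bar> + \<bar>- (\<beta> * gs x) / lam + f 0\<bar>)"
      using gsi int_const by (intro Bochner_Integration.integrable_add integrable_abs integrable_mult_right
          Bochner_Integration.integrable_diff integrable_divide integrable_minus) auto
    show "AE x in Q. norm (f (gs x)) \<le> norm (\<bar>f 1 + deriv f 1 * (gs x - 1)\<bar> + \<bar>- (\<beta> * gs x) / lam + f 0\<bar>)"
      using bnds by eventually_elim auto
  qed
  have Lgi: "integrable Q (\<lambda>x. L x * gs x)"
  proof (rule Bochner_Integration.integrable_bound[OF _ Lgm])
    show "integrable Q (\<lambda>x. - (\<beta> * gs x) + lam * (f 0 - f 1 - deriv f 1 * (gs x - 1)))"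
      using gsi int_const by (intro Bochner_Integration.integrable_add integrable_mult_right
          Bochner_Integration.integrable_diff integrable_minus) auto
    show "AE x in Q. norm (L x * gs x) \<le> norm (- (\<beta> * gs x) + lam * (f 0 - f 1 - deriv f 1 * (gs x - 1)))"
      using bnds by eventually_elim auto
  qed
  have kk_eq: "kk x = (- (\<beta> * gs x) - L x * gs x) / lam - f (gs x)" for x
    unfolding kk_def t_def using lam_pos by (simp add: field_simps)
  have kki: "integrable Q kk"
    unfolding kk_eq[abs_def] using Lgi fgi gsi
    by (intro Bochner_Integration.integrable_diff integrable_divide Bochner_Integration.integrable_diff integrable_mult_right) auto
  have kk_int: "integral\<^sup>L Q kk = (- (\<beta> * integral\<^sup>L Q gs) - integral\<^sup>L Q (\<lambda>x. L x * gs x)) / lam - integral\<^sup>L Q (\<lambda>x. f (gs x))"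
    unfolding kk_eq[abs_def] using Lgi fgi gsi
    by (simp add: Bochner_Integration.integral_diff integrable_divide Bochner_Integration.integrable_diff integrable_mult_right Bochner_Integration.integrable_minus)
  have "ext_integral Q (\<lambda>x. fconj f (- (\<beta> + L x) / lam)) = ext_integral Q (\<lambda>x. ereal (kk x))"
    by (rule EI_cong_AE) (use Fk in \<open>simp add: t_def\<close>)
  also have "\<dots> = ereal (integral\<^sup>L Q kk)"
    using EI_real[OF borel_measurable_integrable[OF kki] int_const klow] kki by simp
  finally have EF: "ext_integral Q (\<lambda>x. fconj f (- (\<beta> + L x) / lam)) = ereal (integral\<^sup>L Q kk)" .
  have lag: "lagrangian L f lam Q gs \<beta> = ereal (integral\<^sup>L Q (\<lambda>x. L x * gs x) + lam * integral\<^sup>L Q (\<lambda>x. f (gs x)) + \<beta> * (integral\<^sup>L Q gs - 1))"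
    unfolding lagrangian_def using EI_Lg[OF gsm gsnn] EI_fg[OF gsm gsi gsnn] Lgi fgi by simp
  show "dual_obj L f lam Q \<beta> = lagrangian L f lam Q gs \<beta>"
    unfolding dual_obj_def EF lag kk_int using lam_pos by (simp add: field_simps)
qed

end


theorem lemma1:
  fixes M :: "(real ^ 'd) set"
    and h :: "real ^ 'd \<Rightarrow> 'x \<Rightarrow> 'y"
    and loss :: "'y \<Rightarrow> 'y \<Rightarrow> real"
    and z :: "('x \<times> 'y) list"
    and Q :: "(real ^ 'd) measure"
    and f :: "real \<Rightarrow> real"
    and lam :: real
  assumes loss_nonneg: "\<And>y y'. loss y y' \<ge> 0"
    and loss_refl: "\<And>y. loss y y = 0"
    and Q_space: "space Q = M"
    and Q_sets: "sets Q = sets (restrict_space borel M)"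
    and Q_prob: "prob_space Q"
    and L_meas: "emp_risk h loss z \<in> borel_measurable Q"
    and lam_pos: "lam > 0"
    and f_convex: "convex_on {0..} f"
    and f_one: "f 1 = 0"
    and f_zero: "(f \<longlongrightarrow> f 0) (at_right 0)"
    and a_strict: "strictly_convex_on {0..} f"
    and a_diff: "\<And>x. x > 0 \<Longrightarrow> f differentiable (at x)"
    and b: "\<exists>\<beta>::real.
              (\<forall>\<theta>\<in>msupport Q.
                 - (\<beta> + emp_risk h loss z \<theta>) / lam \<in> deriv f ` {0<..} \<and>
                 the_inv_into {0<..} (deriv f) (- (\<beta> + emp_risk h loss z \<theta>) / lam) > 0)
            \<and> integrable Q (\<lambda>\<theta>. the_inv_into {0<..} (deriv f) (- (\<beta> + emp_risk h loss z \<theta>) / lam))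
            \<and> (\<integral>\<theta>. the_inv_into {0<..} (deriv f) (- (\<beta> + emp_risk h loss z \<theta>) / lam) \<partial>Q) = 1"
  shows "(\<forall>\<beta>. dual_obj (emp_risk h loss z) f lam Q \<beta> =
            (INF g \<in> {g. g \<in> borel_measurable Q \<and> (\<forall>\<theta>\<in>space Q. g \<theta> \<ge> 0) \<and> integrable Q g}.
               lagrangian (emp_risk h loss z) f lam Q g \<beta>))
       \<and> (\<exists>P\<in>abs_cont_probs Q. \<exists>\<beta>::real.
            (\<forall>P'\<in>abs_cont_probs Q.
               erm_fdr_obj (emp_risk h loss z) f lam Q P \<le> erm_fdr_obj (emp_risk h loss z) f lam Q P')
          \<and> (\<forall>\<beta>'. dual_obj (emp_risk h loss z) f lam Q \<beta>' \<le> dual_obj (emp_risk h loss z) f lam Q \<beta>)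
          \<and> erm_fdr_obj (emp_risk h loss z) f lam Q P = dual_obj (emp_risk h loss z) f lam Q \<beta>)"
proof -
  define L where "L = emp_risk h loss z"
  have L_nn: "0 \<le> L x" for x
  proof -
    have "0 \<le> (\<Sum>(a, b) \<leftarrow> z. loss (h x a) b)"
      by (rule sum_list_nonneg) (auto simp: loss_nonneg)
    then show ?thesis unfolding L_def emp_risk_def by simp
  qed
  interpret dsetup f Q L lam
  proof -
    have Lm: "L \<in> borel_measurable Q" unfolding L_def by (rule L_meas)
    show "dsetup f Q L lam"
      unfolding dsetup_def dsetup_axioms_def fdr_def
      using f_convex f_zero a_diff Q_prob Lm lam_pos L_nn by blast
  qed
  have inj: "inj_on (deriv f) {0<..}" by (rule deriv_inj[OF a_strict])
  obtain \<beta> where bb: "(\<forall>\<theta>\<in>msupport Q. - (\<beta> + L \<theta>) / lam \<in> deriv f ` {0<..} \<and>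
                 the_inv_into {0<..} (deriv f) (- (\<beta> + L \<theta>) / lam) > 0)
        \<and> integrable Q (\<lambda>\<theta>. the_inv_into {0<..} (deriv f) (- (\<beta> + L \<theta>) / lam))
        \<and> (\<integral>\<theta>. the_inv_into {0<..} (deriv f) (- (\<beta> + L \<theta>) / lam) \<partial>Q) = 1"
    using b unfolding L_def by (rule exE)
  note b1 = bb[THEN conjunct1] and b2 = bb[THEN conjunct2, THEN conjunct1] and b3 = bb[THEN conjunct2, THEN conjunct2]
  define gst where "gst \<theta> = the_inv_into {0<..} (deriv f) (- (\<beta> + L \<theta>) / lam)" for \<theta>
  have "sets Q = sets (restrict_space borel (space Q))" using Q_sets Q_space by simp
  then have aesupp: "AE x in Q. x \<in> msupport Q" by (rule AE_msupport)
  have good: "AE x in Q. 0 < gst x \<and> deriv f (gst x) = - (\<beta> + L x) / lam"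
    using aesupp
  proof eventually_elim
    case (elim x)
    then have v: "- (\<beta> + L x) / lam \<in> deriv f ` {0<..}" and g0: "0 < gst x"
      using b1 unfolding gst_def by auto
    have "deriv f (gst x) = - (\<beta> + L x) / lam"
      unfolding gst_def by (rule f_the_inv_into_f[OF inj v])
    then show ?case using g0 by simp
  qed
  have gi: "integrable Q gst" using b2 unfolding gst_def .
  define gs where "gs = (\<lambda>x. max 0 (gst x))"
  note DO0 = dual_opt[OF gi good]
  have DO1: "gs \<in> borel_measurable Q" unfolding gs_def by (rule DO0(1))
  have DO2: "\<And>x. 0 \<le> gs x" unfolding gs_def by (rule DO0(2))
  have DO3: "integrable Q gs" unfolding gs_def by (rule DO0(3))
  have DO4: "integral\<^sup>L Q gs = integral\<^sup>L Q gst" unfolding gs_def by (rule DO0(4))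
  have DO5: "dual_obj L f lam Q \<beta> = lagrangian L f lam Q gs \<beta>" unfolding gs_def by (rule DO0(5))
  note DO = DO1 DO2 DO3 DO4 DO5
  have gs1: "integral\<^sup>L Q gs = 1" using DO(4) b3 unfolding gst_def by simp
  define Pst where "Pst = density Q (\<lambda>x. ennreal (gs x))"
  have ennm: "(\<lambda>x. ennreal (gs x)) \<in> borel_measurable Q" using DO(1) by measurable
  have Pst_in: "Pst \<in> abs_cont_probs Q"
    unfolding abs_cont_probs_def
  proof (intro CollectI conjI)
    show "sets Pst = sets Q" unfolding Pst_def by simp
    show "absolutely_continuous Q Pst" unfolding Pst_def by (rule absolutely_continuousI_density[OF ennm])
    show "prob_space Pst"
    proof (rule prob_spaceI)
      have "emeasure Pst (space Pst) = (\<integral>\<^sup>+ x. ennreal (gs x) * indicator (space Q) x \<partial>Q)"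
        unfolding Pst_def by (simp add: emeasure_density[OF ennm])
      also have "\<dots> = (\<integral>\<^sup>+ x. ennreal (gs x) \<partial>Q)"
        by (rule nn_integral_cong) simp
      also have "\<dots> = ennreal (integral\<^sup>L Q gs)"
        by (rule nn_integral_eq_integral[OF DO(3)], rule AE_I2) (rule DO(2))
      finally show "emeasure Pst (space Pst) = 1" using gs1 by simp
    qed
  qed
  have erm_eq: "erm_fdr_obj L f lam Q Pst = lagrangian L f lam Q gs \<beta>'" for \<beta>'
  proof -
    note E = erm_lag[OF Pst_in]
    have "AE x in Q. ennreal (gs x) = RN_deriv Q Pst x"
      by (rule sigma_finite_measure.RN_deriv_unique[OF sfQ ennm]) (simp add: Pst_def)
    then have ae: "AE x in Q. enn2real (RN_deriv Q Pst x) = gs x"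
    proof eventually_elim
      case (elim x)
      then have "enn2real (RN_deriv Q Pst x) = enn2real (ennreal (gs x))" by simp
      also have "\<dots> = gs x" using DO(2)[of x] by simp
      finally show ?case .
    qed
    show ?thesis using E(5)[of \<beta>'] lag_cong[OF E(1) DO(1) ae] by simp
  qed
  have main: "erm_fdr_obj L f lam Q Pst = dual_obj L f lam Q \<beta>"
    using erm_eq[of \<beta>] DO(5) by simp
  show ?thesis
    unfolding L_def[symmetric]
  proof (intro conjI allI bexI[OF _ Pst_in] exI[of _ \<beta>] ballI)
    show "dual_obj L f lam Q \<beta>' = (INF g \<in> {g. g \<in> borel_measurable Q \<and> (\<forall>\<theta>\<in>space Q. g \<theta> \<ge> 0) \<and> integrable Q g}.
               lagrangian L f lam Q g \<beta>')" for \<beta>'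
      by (rule INF_eq)
    show "erm_fdr_obj L f lam Q Pst \<le> erm_fdr_obj L f lam Q P'" if P': "P' \<in> abs_cont_probs Q" for P'
    proof -
      note E = erm_lag[OF P']
      have "dual_obj L f lam Q \<beta> \<le> lagrangian L f lam Q (\<lambda>x. enn2real (RN_deriv Q P' x)) \<beta>"
        by (rule weak[OF E(1) E(3)]) (use E(2) in auto)
      then show ?thesis using main E(5)[of \<beta>] by simp
    qed
    show "dual_obj L f lam Q \<beta>' \<le> dual_obj L f lam Q \<beta>" for \<beta>'
    proof -
      have "dual_obj L f lam Q \<beta>' \<le> lagrangian L f lam Q gs \<beta>'"
        by (rule weak[OF DO(1) DO(3)]) (use DO(2) in auto)
      then show ?thesis using erm_eq[of \<beta>'] main by simp
    qed
    show "erm_fdr_obj L f lam Q Pst = dual_obj L f lam Q \<beta>" by (rule main)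
  qed
qed

end
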